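(* Let $\mathcal{X}$ be a discrete set and let $\mathcal{A}$ be an $\varepsilon$-differentially private randomized algorithm that on input a dataset in $\mathcal{X}^n$ outputs a function from $\mathcal{X}$ to $[0,1]$. Let $\mathcal{P}$ be a distribution over $\mathcal{X}$, let $\mathbf{S}$ be distributed according to $\mathcal{P}^n$ and let $\boldsymbol{\phi}=\mathcal{A}(\mathbf{S})$. Then for any $\tau>0$, if $\varepsilon\le\sqrt{\tau^2-\ln(2)/(2n)}$, then $$\Pr\left[\,\left|\mathcal{P}[\boldsymbol{\phi}]-\mathcal{E}_{\mathbf{S}}[\boldsymbol{\phi}]\right|>\tau\,\right]\le 3\sqrt{2}\,e^{-\tau^2 n}.$$
   Context: For $\psi:\mathcal{X}\to[0,1]$, $\mathcal{P}[\psi]=\mathbb{E}_{x\sim\mathcal{P}}[\psi(x)]$ and for $S=(x_1,\dots,x_n)$, $\mathcal{E}_S[\psi]=\frac1n\sum_{i=1}^n\psi(x_i)$. Two datasets in $\mathcal{X}^n$ are adjacent if they differ in a single element. A randomized algorithm $\mathcal{A}$ with domain $\mathcal{X}^n$ is $\varepsilon$-differentially private if for every set $\mathcal{S}$ of outputs and every pair of adjacent datasets $x,y$, $\Pr[\mathcal{A}(x)\in\mathcal{S}]\le e^{\varepsilon}\Pr[\mathcal{A}(y)\in\mathcal{S}]$. The probability is over $\mathbf{S}$ and the randomness of $\mathcal{A}$. *)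

theory Defs
  imports "HOL-Probability.Probability"
begin

definition pop_mean :: "'a pmf \<Rightarrow> ('a \<Rightarrow> real) \<Rightarrow> real" where
  "pop_mean P \<psi> = measure_pmf.expectation P \<psi>"

definition emp_mean :: "'a list \<Rightarrow> ('a \<Rightarrow> real) \<Rightarrow> real" where
  "emp_mean S \<psi> = (\<Sum>x\<leftarrow>S. \<psi> x) / real (length S)"

definition adjacent :: "'a list \<Rightarrow> 'a list \<Rightarrow> bool" where
  "adjacent x y \<longleftrightarrow> length x = length y \<and> card {i. i < length x \<and> x ! i \<noteq> y ! i} = 1"

definition out_space :: "('a \<Rightarrow> real) measure" where
  "out_space = PiM UNIV (\<lambda>_. borel)"

definition is_algorithm :: "nat \<Rightarrow> ('a list \<Rightarrow> ('a \<Rightarrow> real) measure) \<Rightarrow> bool" where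
  "is_algorithm n A \<longleftrightarrow> (\<forall>x. length x = n \<longrightarrow> prob_space (A x) \<and> sets (A x) = sets out_space)"

definition differentially_private ::
  "real \<Rightarrow> nat \<Rightarrow> ('a list \<Rightarrow> ('a \<Rightarrow> real) measure) \<Rightarrow> bool" where
  "differentially_private \<epsilon> n A \<longleftrightarrow>
     (\<forall>x y T. length x = n \<and> length y = n \<and> adjacent x y \<and> T \<in> sets out_space \<longrightarrow>
        measure (A x) T \<le> exp \<epsilon> * measure (A y) T)"

end

theory Submission
  imports Defs
begin


lemma exp_ineq:
  fixes x :: real assumes "0 \<le> x" shows "exp x * (2 - x) \<le> 2 + x"
proof -
  let ?f = "\<lambda>t::real. 2 + t - exp t * (2 - t)"
  have "?f 0 \<le> ?f x"
  proof (rule DERIV_nonneg_imp_increasing_open[OF assms])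
    fix t :: real assume t: "0 < t" "t < x"
    have d: "DERIV ?f t :> 1 - (exp t * (2 - t) + exp t * (-1))"
      by (auto intro!: derivative_eq_intros)
    have "exp (-t) \<ge> 1 - t" using exp_ge_add_one_self[of "-t"] by simp
    hence "exp t * (1 - t) \<le> exp t * exp (-t)" by (intro mult_left_mono) auto
    hence "exp t * (1 - t) \<le> 1" by (simp add: exp_minus)
    hence "1 - (exp t * (2 - t) + exp t * (-1)) \<ge> 0" by (simp add: algebra_simps)
    thus "\<exists>y. DERIV ?f t :> y \<and> 0 \<le> y" using d by blast
  next
    show "continuous_on {0..x} ?f" by (intro continuous_intros)
  qed
  thus ?thesis by simp
qed

lemma tanh_like:
  fixes x :: real assumes "0 \<le> x" shows "(exp x - 1) / (exp x + 1) \<le> x / 2"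
proof -
  have "exp x * (2 - x) \<le> 2 + x" by (rule exp_ineq[OF assms])
  hence "2 * (exp x - 1) \<le> x * (exp x + 1)" by (simp add: algebra_simps)
  moreover have "exp x + 1 > 0" by (simp add: add_pos_pos)
  ultimately show ?thesis by (simp add: divide_simps)
qed

lemma chord_bound:
  fixes a b m :: real
  assumes "0 < a" "a \<le> m" "m \<le> b" "b \<le> exp e * a" "e \<ge> 0"
  shows "(b - m) * (m - a) \<le> (e / 4) * m * (b - a)"
proof -
  have sa: "sqrt a > 0" "sqrt b > 0" using assms by auto
  have "(b - m) * (m - a) \<le> m * (sqrt b - sqrt a)^2"
  proof -
    have "m * (sqrt b - sqrt a)^2 - (b - m) * (m - a) = (m - sqrt a * sqrt b)^2"
      using assms by (simp add: power2_eq_square algebra_simps)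
    thus ?thesis by (metis diff_ge_0_iff_ge zero_le_power2)
  qed
  also have "(sqrt b - sqrt a)^2 = (sqrt b - sqrt a) / (sqrt b + sqrt a) * (b - a)"
  proof -
    have q: "sqrt a * sqrt a = a" "sqrt b * sqrt b = b" using assms by auto
    have "sqrt b + sqrt a > 0" using sa by (simp add: add_pos_pos)
    have g: "\<And>u v::real. u + v > 0 \<Longrightarrow> (v - u)^2 = (v - u) / (v + u) * (v * v - u * u)"
      by (simp add: power2_eq_square divide_simps algebra_simps)
    have "(sqrt b - sqrt a)^2 = (sqrt b - sqrt a) / (sqrt b + sqrt a) * (sqrt b * sqrt b - sqrt a * sqrt a)"
      using g[of "sqrt a" "sqrt b"] sa by (simp add: add.commute)
    thus ?thesis using q by simp
  qed
  also have "(sqrt b - sqrt a) / (sqrt b + sqrt a) \<le> e / 4"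
  proof -
    have "sqrt b \<le> sqrt (exp e * a)" using assms by simp
    also have "\<dots> = exp (e/2) * sqrt a"
    proof -
      have "sqrt (exp e) = exp (e/2)"
        by (rule real_sqrt_unique) (simp_all add: power2_eq_square exp_add[symmetric])
      thus ?thesis by (simp add: real_sqrt_mult)
    qed
    finally have sb: "sqrt b \<le> exp (e/2) * sqrt a" .
    have "(sqrt b - sqrt a) / (sqrt b + sqrt a) \<le> (exp (e/2) * sqrt a - sqrt a) / (exp (e/2) * sqrt a + sqrt a)"
    proof -
      have "(sqrt b - sqrt a) * (exp (e/2) * sqrt a + sqrt a) \<le> (exp (e/2) * sqrt a - sqrt a) * (sqrt b + sqrt a)"
        using sb sa by (simp add: algebra_simps)
      thus ?thesis using sa by (simp add: divide_simps add_pos_pos)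
    qed
    also have "\<dots> = (exp (e/2) - 1) / (exp (e/2) + 1)"
    proof -
      have p1: "exp (e/2) + 1 > 0" by (simp add: add_pos_pos)
      have "(exp (e/2) * sqrt a - sqrt a) = sqrt a * (exp (e/2) - 1)"
           "(exp (e/2) * sqrt a + sqrt a) = sqrt a * (exp (e/2) + 1)" by (simp_all add: algebra_simps)
      thus ?thesis using sa p1 by simp
    qed
    also have "\<dots> \<le> (e/2)/2" by (rule tanh_like) (use assms in simp)
    finally show ?thesis by simp
  qed
  hence "m * ((sqrt b - sqrt a) / (sqrt b + sqrt a) * (b - a)) \<le> m * (e / 4 * (b - a))"
    using assms by (intro mult_left_mono mult_right_mono) auto
  finally show ?thesis by (simp add: algebra_simps)
qed



lemma pmf_integrable_bounded:
  fixes g :: "'a \<Rightarrow> real"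
  assumes "\<And>y. \<bar>g y\<bar> \<le> B"
  shows "integrable (measure_pmf P) g"
  by (rule measure_pmf.integrable_const_bound[where B=B]) (use assms in auto)

lemma cov_bound:
  fixes P :: "'a pmf" and \<rho> f :: "'a \<Rightarrow> real"
  assumes rpos: "\<And>y. \<rho> y \<ge> 0" and rr: "\<And>y y'. \<rho> y \<le> exp e * \<rho> y'" and e: "e \<ge> 0"
    and f01: "\<And>y. f y \<in> {0..1}"
  shows "\<bar>measure_pmf.expectation P (\<lambda>y. \<rho> y * (f y - measure_pmf.expectation P f))\<bar>
          \<le> (e/4) * measure_pmf.expectation P \<rho>"
proof -
  define \<mu> where "\<mu> = measure_pmf.expectation P \<rho>"
  define Ef where "Ef = measure_pmf.expectation P f"
  define B where "B = exp e * \<rho> undefined"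
  have rB: "\<rho> y \<le> B" for y unfolding B_def by (rule rr)
  have iR: "integrable (measure_pmf P) \<rho>"
    by (rule pmf_integrable_bounded[where B=B]) (use rpos rB in auto)
  have iF: "integrable (measure_pmf P) f"
    by (rule pmf_integrable_bounded[where B=1]) (use f01 in auto)
  have iRF: "integrable (measure_pmf P) (\<lambda>y. \<rho> y * f y)"
    by (rule pmf_integrable_bounded[where B=B]) (use rpos rB f01 in \<open>auto simp: abs_mult intro: mult_le_one order_trans[OF mult_right_le_one_le]\<close>)
  define a where "a = (INF y. \<rho> y)"
  define b where "b = (SUP y. \<rho> y)"
  have bdda: "bdd_above (range \<rho>)" using rB by (intro bdd_aboveI[where M=B]) auto
  have bddb: "bdd_below (range \<rho>)" using rpos by (intro bdd_belowI[where m=0]) auto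
  have ay: "a \<le> \<rho> y" for y unfolding a_def using bddb by (auto intro: cINF_lower)
  have yb: "\<rho> y \<le> b" for y unfolding b_def using bdda by (auto intro: cSUP_upper)
  have a0: "a \<ge> 0" unfolding a_def using rpos by (auto intro: cINF_greatest)
  have "b \<le> exp e * \<rho> y'" for y' unfolding b_def using rr by (auto intro: cSUP_least)
  hence "b / exp e \<le> \<rho> y'" for y' by (simp add: divide_simps mult.commute)
  hence "b / exp e \<le> a" unfolding a_def by (auto intro: cINF_greatest)
  hence bea: "b \<le> exp e * a" by (simp add: divide_simps mult.commute)
  have am: "a \<le> \<mu>"
  proof -
    have "measure_pmf.expectation P (\<lambda>_. a) \<le> \<mu>" unfolding \<mu>_def
      by (intro integral_mono iR ay) auto
    thus ?thesis by simp
  qed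
  have mb: "\<mu> \<le> b"
  proof -
    have "\<mu> \<le> measure_pmf.expectation P (\<lambda>_. b)" unfolding \<mu>_def
      by (intro integral_mono iR yb) auto
    thus ?thesis by simp
  qed
  have eq: "measure_pmf.expectation P (\<lambda>y. \<rho> y * (f y - Ef))
      = measure_pmf.expectation P (\<lambda>y. (\<rho> y - \<mu>) * f y)"
  proof -
    have "measure_pmf.expectation P (\<lambda>y. \<rho> y * (f y - Ef))
       = measure_pmf.expectation P (\<lambda>y. \<rho> y * f y) - Ef * \<mu>"
      unfolding \<mu>_def using iR iRF by (simp add: algebra_simps)
    also have "\<dots> = measure_pmf.expectation P (\<lambda>y. (\<rho> y - \<mu>) * f y)"
      unfolding Ef_def using iF iRF by (simp add: algebra_simps)
    finally show ?thesis .
  qed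
  define h where "h = (\<lambda>y. max (\<rho> y - \<mu>) 0)"
  have hB: "\<bar>h y\<bar> \<le> B + \<bar>\<mu>\<bar>" for y using rpos[of y] rB[of y] unfolding h_def by auto
  have ih: "integrable (measure_pmf P) h"
    by (rule pmf_integrable_bounded[where B="B + \<bar>\<mu>\<bar>"]) (rule hB)
  have iRm: "integrable (measure_pmf P) (\<lambda>y. (\<rho> y - \<mu>) * f y)"
    using iRF iF by (simp add: algebra_simps)
  have Eh0: "measure_pmf.expectation P (\<lambda>y. \<rho> y - \<mu>) = 0"
    unfolding \<mu>_def using iR by simp
  have up: "measure_pmf.expectation P (\<lambda>y. (\<rho> y - \<mu>) * f y) \<le> measure_pmf.expectation P h"
  proof (intro integral_mono iRm ih)
    fix y show "(\<rho> y - \<mu>) * f y \<le> h y"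
      using f01[of y] unfolding h_def
      by (cases "\<rho> y - \<mu> \<ge> 0") (auto intro: mult_left_le order_trans[of _ 0] mult_nonpos_nonneg)
  qed
  have lo: "- measure_pmf.expectation P h \<le> measure_pmf.expectation P (\<lambda>y. (\<rho> y - \<mu>) * f y)"
  proof -
    have "measure_pmf.expectation P (\<lambda>y. (\<rho> y - \<mu>) - h y) \<le> measure_pmf.expectation P (\<lambda>y. (\<rho> y - \<mu>) * f y)"
    proof (intro integral_mono iRm)
      show "integrable (measure_pmf P) (\<lambda>y. \<rho> y - \<mu> - h y)" using iR ih by simp
      fix y show "\<rho> y - \<mu> - h y \<le> (\<rho> y - \<mu>) * f y"
      proof (cases "\<rho> y - \<mu> \<ge> 0")
        case True thus ?thesis using f01[of y] unfolding h_def by (simp add: mult_nonneg_nonneg)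
      next
        case False
        hence "(\<rho> y - \<mu>) * 1 \<le> (\<rho> y - \<mu>) * f y" using f01[of y]
          by (intro mult_left_mono_neg) auto
        thus ?thesis using False unfolding h_def by simp
      qed
    qed
    also have "measure_pmf.expectation P (\<lambda>y. (\<rho> y - \<mu>) - h y) = - measure_pmf.expectation P h"
      using Eh0 iR ih by (subst Bochner_Integration.integral_diff) auto
    finally show ?thesis by simp
  qed
  have hb: "measure_pmf.expectation P h \<le> (e/4) * \<mu>"
  proof (cases "a < b")
    case False
    hence "\<rho> y = \<mu>" for y using ay[of y] yb[of y] am mb by linarith
    hence "h = (\<lambda>_. 0)" unfolding h_def by auto
    thus ?thesis using e a0 am by simp
  next
    case True
    have apos: "a > 0"
    proof (rule ccontr)
      assume "\<not> a > 0" hence "a = 0" using a0 by simp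
      thus False using bea True by simp
    qed
    have "measure_pmf.expectation P h \<le> measure_pmf.expectation P (\<lambda>y. (b - \<mu>) / (b - a) * (\<rho> y - a))"
    proof (intro integral_mono ih)
      show "integrable (measure_pmf P) (\<lambda>y. (b - \<mu>) / (b - a) * (\<rho> y - a))" using iR by simp
      fix y
      have "(\<rho> y - \<mu>) * (b - a) \<le> (b - \<mu>) * (\<rho> y - a)"
      proof -
        have "(\<mu> - a) * (\<rho> y - b) \<le> 0" using am yb[of y] by (intro mult_nonneg_nonpos) auto
        thus ?thesis by (simp add: algebra_simps)
      qed
      hence c1: "\<rho> y - \<mu> \<le> (b - \<mu>) / (b - a) * (\<rho> y - a)" using True by (simp add: divide_simps)
      have c2: "0 \<le> (b - \<mu>) / (b - a) * (\<rho> y - a)" using True mb ay[of y] by simp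
      show "h y \<le> (b - \<mu>) / (b - a) * (\<rho> y - a)" unfolding h_def using c1 c2 by simp
    qed
    also have "\<dots> = (b - \<mu>) / (b - a) * (\<mu> - a)" unfolding \<mu>_def using iR by simp
    also have "\<dots> \<le> (e/4) * \<mu>"
      using chord_bound[OF apos am mb bea e] True by (simp add: divide_simps mult.commute mult.left_commute)
    finally show ?thesis .
  qed
  show ?thesis unfolding eq[unfolded Ef_def] \<mu>_def[symmetric] using up lo hb by linarith
qed



lemma hoeff_any:
  fixes Q :: "'b measure" and g :: "'b \<Rightarrow> real"
  assumes "prob_space Q" and [measurable]: "g \<in> borel_measurable Q"
    and gi: "\<And>x. x \<in> space Q \<Longrightarrow> g x \<in> {c..c+1}"
  shows "(\<integral>\<^sup>+x. ennreal (exp (l * g x)) \<partial>Q) \<le> ennreal (exp (l * integral\<^sup>L Q g + l\<^sup>2 / 8))"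
proof -
  interpret Q: prob_space Q by fact
  have eqm: "(\<integral>\<^sup>+x. ennreal (exp (l * g x)) \<partial>Q)
      = ennreal (exp (l * integral\<^sup>L Q g)) * (\<integral>\<^sup>+x. ennreal (exp (l * (g x - integral\<^sup>L Q g))) \<partial>Q)"
  proof -
    have "\<And>x. exp (l * g x) = exp (l * integral\<^sup>L Q g) * exp (l * (g x - integral\<^sup>L Q g))"
      by (simp only: exp_add[symmetric]) (simp add: algebra_simps)
    hence "(\<integral>\<^sup>+x. ennreal (exp (l * g x)) \<partial>Q) = (\<integral>\<^sup>+x. ennreal (exp (l * integral\<^sup>L Q g)) * ennreal (exp (l * (g x - integral\<^sup>L Q g))) \<partial>Q)"
      by (simp add: ennreal_mult)
    also have "\<dots> = ennreal (exp (l * integral\<^sup>L Q g)) * (\<integral>\<^sup>+x. ennreal (exp (l * (g x - integral\<^sup>L Q g))) \<partial>Q)"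
      by (rule nn_integral_cmult) simp
    finally show ?thesis .
  qed
  consider "l > 0" | "l = 0" | "l < 0" by linarith
  then show ?thesis
  proof cases
    case 1
    interpret I: interval_bounded_random_variable Q g c "c+1"
      by unfold_locales (use gi in auto)
    have "(\<integral>\<^sup>+x. ennreal (exp (l * (g x - integral\<^sup>L Q g))) \<partial>Q) \<le> ennreal (exp (l\<^sup>2 * (c + 1 - c)\<^sup>2 / 8))"
      by (rule I.Hoeffdings_lemma_nn_integral[OF 1])
    hence "(\<integral>\<^sup>+x. ennreal (exp (l * g x)) \<partial>Q) \<le> ennreal (exp (l * integral\<^sup>L Q g)) * ennreal (exp (l\<^sup>2 / 8))"
      unfolding eqm by (intro mult_left_mono) auto
    also have "ennreal (exp (l * integral\<^sup>L Q g)) * ennreal (exp (l\<^sup>2 / 8)) = ennreal (exp (l * integral\<^sup>L Q g + l\<^sup>2 / 8))"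
      by (simp add: exp_add ennreal_mult)
    finally show ?thesis .
  next
    case 2
    thus ?thesis by (simp add: Q.emeasure_space_1)
  next
    case 3
    have m1: "(\<lambda>x. - g x) \<in> borel_measurable Q" by simp
    have a1: "AE x in Q. - g x \<in> {-c-1..-c}"
    proof (rule AE_I2)
      fix x assume "x \<in> space Q" thus "- g x \<in> {-c-1..-c}" using gi[of x] by simp
    qed
    interpret I: interval_bounded_random_variable Q "\<lambda>x. - g x" "-c-1" "-c"
      by (intro interval_bounded_random_variable.intro interval_bounded_random_variable_axioms.intro Q.prob_space_axioms m1 a1)
    have H: "(\<integral>\<^sup>+x. ennreal (exp ((-l) * (- g x - integral\<^sup>L Q (\<lambda>x. - g x)))) \<partial>Q) \<le> ennreal (exp ((-l)\<^sup>2 * (- c - (-c-1))\<^sup>2 / 8))"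
      by (rule I.Hoeffdings_lemma_nn_integral) (use 3 in simp)
    have e1: "integral\<^sup>L Q (\<lambda>x. - g x) = - integral\<^sup>L Q g" by (rule Bochner_Integration.integral_minus)
    have e2: "\<And>x. (-l) * (- g x - - integral\<^sup>L Q g) = l * (g x - integral\<^sup>L Q g)" by (simp add: algebra_simps)
    have e3: "(-l)\<^sup>2 * (- c - (-c-1))\<^sup>2 / 8 = l\<^sup>2 / 8" by simp
    have "(\<integral>\<^sup>+x. ennreal (exp (l * (g x - integral\<^sup>L Q g))) \<partial>Q) \<le> ennreal (exp (l\<^sup>2 / 8))"
      using H unfolding e1 e2 e3 .
    hence "(\<integral>\<^sup>+x. ennreal (exp (l * g x)) \<partial>Q) \<le> ennreal (exp (l * integral\<^sup>L Q g)) * ennreal (exp (l\<^sup>2 / 8))"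
      unfolding eqm by (intro mult_left_mono) auto
    also have "ennreal (exp (l * integral\<^sup>L Q g)) * ennreal (exp (l\<^sup>2 / 8)) = ennreal (exp (l * integral\<^sup>L Q g + l\<^sup>2 / 8))"
      by (simp add: exp_add ennreal_mult)
    finally show ?thesis .
  qed
qed



lemma pointwise_real:
  fixes P :: "'a pmf" and \<rho> f :: "'a \<Rightarrow> real"
  assumes rpos: "\<And>y. \<rho> y \<ge> 0" and rr: "\<And>y y'. \<rho> y \<le> exp e * \<rho> y'" and e: "e \<ge> 0"
    and f01: "\<And>y. f y \<in> {0..1}"
  shows "(\<integral>\<^sup>+y. ennreal (\<rho> y * exp (l * (f y - measure_pmf.expectation P f))) \<partial>P)
          \<le> ennreal (exp (l\<^sup>2/8 + \<bar>l\<bar> * e/4)) * (\<integral>\<^sup>+y. ennreal (\<rho> y) \<partial>P)"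
proof -
  define \<mu> where "\<mu> = measure_pmf.expectation P \<rho>"
  define Ef where "Ef = measure_pmf.expectation P f"
  define g where "g = (\<lambda>y. f y - Ef)"
  define B where "B = exp e * \<rho> undefined"
  have rB: "\<rho> y \<le> B" for y unfolding B_def by (rule rr)
  have iR: "integrable (measure_pmf P) \<rho>"
    by (rule pmf_integrable_bounded[where B=B]) (use rpos rB in auto)
  have N: "(\<integral>\<^sup>+y. ennreal (\<rho> y) \<partial>P) = ennreal \<mu>"
    unfolding \<mu>_def by (rule nn_integral_eq_integral[OF iR]) (use rpos in auto)
  have m0: "\<mu> \<ge> 0" unfolding \<mu>_def by (rule Bochner_Integration.integral_nonneg) (use rpos in auto)
  show ?thesis
  proof (cases "\<mu> = 0")
    case True
    hence "AE y in P. \<rho> y = 0"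
      using integral_nonneg_eq_0_iff_AE[OF iR] rpos unfolding \<mu>_def by auto
    hence "(\<integral>\<^sup>+y. ennreal (\<rho> y * exp (l * (f y - measure_pmf.expectation P f))) \<partial>P) = (\<integral>\<^sup>+y. 0 \<partial>P)"
      by (intro nn_integral_cong_AE) auto
    thus ?thesis by simp
  next
    case False
    hence mpos: "\<mu> > 0" using m0 by simp
    define Q where "Q = density (measure_pmf P) (\<lambda>y. ennreal (\<rho> y / \<mu>))"
    have iRm: "integrable (measure_pmf P) (\<lambda>y. \<rho> y / \<mu>)" using iR by simp
    have "(\<integral>\<^sup>+y. ennreal (\<rho> y / \<mu>) \<partial>P) = ennreal (measure_pmf.expectation P (\<lambda>y. \<rho> y / \<mu>))"
      by (rule nn_integral_eq_integral[OF iRm]) (use rpos m0 in auto)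
    also have "measure_pmf.expectation P (\<lambda>y. \<rho> y / \<mu>) = 1" using mpos unfolding \<mu>_def by simp
    finally have one: "(\<integral>\<^sup>+y. ennreal (\<rho> y / \<mu>) \<partial>P) = 1" by simp
    have pQ: "prob_space Q"
    proof
      show "emeasure Q (space Q) = 1"
        unfolding Q_def using one by (simp add: emeasure_density)
    qed
    have spQ: "space Q = UNIV" unfolding Q_def by simp
    have gm: "g \<in> borel_measurable Q" unfolding Q_def by simp
    have gi: "\<And>x. x \<in> space Q \<Longrightarrow> g x \<in> {-Ef..-Ef+1}" using f01 unfolding g_def by auto
    have H: "(\<integral>\<^sup>+x. ennreal (exp (l * g x)) \<partial>Q) \<le> ennreal (exp (l * integral\<^sup>L Q g + l\<^sup>2 / 8))"
      by (rule hoeff_any[OF pQ gm gi])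
    have IQ: "integral\<^sup>L Q g = measure_pmf.expectation P (\<lambda>y. \<rho> y * g y) / \<mu>"
    proof -
      have "integral\<^sup>L Q g = measure_pmf.expectation P (\<lambda>y. (\<rho> y / \<mu>) *\<^sub>R g y)"
        unfolding Q_def by (rule integral_density) (use rpos m0 in auto)
      also have "\<dots> = measure_pmf.expectation P (\<lambda>y. \<rho> y * g y) / \<mu>"
        by simp
      finally show ?thesis .
    qed
    have cb: "\<bar>measure_pmf.expectation P (\<lambda>y. \<rho> y * g y)\<bar> \<le> (e/4) * \<mu>"
      using cov_bound[OF rpos rr e f01, of P] unfolding g_def Ef_def \<mu>_def .
    have "l * integral\<^sup>L Q g \<le> \<bar>l\<bar> * (e/4)"
    proof -
      have "\<bar>integral\<^sup>L Q g\<bar> \<le> e/4" unfolding IQ using cb mpos by (simp add: divide_simps)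
      hence "l * integral\<^sup>L Q g \<le> \<bar>l\<bar> * \<bar>integral\<^sup>L Q g\<bar>" by (simp add: abs_mult[symmetric])
      also have "\<dots> \<le> \<bar>l\<bar> * (e/4)" using \<open>\<bar>integral\<^sup>L Q g\<bar> \<le> e/4\<close> by (intro mult_left_mono) auto
      finally show ?thesis .
    qed
    hence H2: "(\<integral>\<^sup>+x. ennreal (exp (l * g x)) \<partial>Q) \<le> ennreal (exp (l\<^sup>2/8 + \<bar>l\<bar> * e/4))"
    proof -
      assume a: "l * integral\<^sup>L Q g \<le> \<bar>l\<bar> * (e/4)"
      have "ennreal (exp (l * integral\<^sup>L Q g + l\<^sup>2 / 8)) \<le> ennreal (exp (l\<^sup>2/8 + \<bar>l\<bar> * e/4))"
        using a by (intro ennreal_leI) simp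
      thus ?thesis using H by (rule order.trans[rotated])
    qed
    have "(\<integral>\<^sup>+y. ennreal (\<rho> y * exp (l * (f y - measure_pmf.expectation P f))) \<partial>P)
        = (\<integral>\<^sup>+y. ennreal \<mu> * (ennreal (\<rho> y / \<mu>) * ennreal (exp (l * g y))) \<partial>P)"
    proof (intro nn_integral_cong)
      fix y
      have eqr: "\<rho> y * exp (l * (f y - measure_pmf.expectation P f)) = \<mu> * ((\<rho> y / \<mu>) * exp (l * g y))"
        using mpos unfolding g_def Ef_def by simp
      have e1: "ennreal (\<mu> * ((\<rho> y / \<mu>) * exp (l * g y))) = ennreal \<mu> * ennreal ((\<rho> y / \<mu>) * exp (l * g y))"
        by (rule ennreal_mult) (use m0 rpos[of y] mpos in auto)
      have e2: "ennreal ((\<rho> y / \<mu>) * exp (l * g y)) = ennreal (\<rho> y / \<mu>) * ennreal (exp (l * g y))"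
        by (rule ennreal_mult) (use m0 rpos[of y] mpos in auto)
      show "ennreal (\<rho> y * exp (l * (f y - measure_pmf.expectation P f))) = ennreal \<mu> * (ennreal (\<rho> y / \<mu>) * ennreal (exp (l * g y)))"
        unfolding eqr e1 e2 ..
    qed
    also have "\<dots> = ennreal \<mu> * (\<integral>\<^sup>+y. ennreal (\<rho> y / \<mu>) * ennreal (exp (l * g y)) \<partial>P)"
      by (rule nn_integral_cmult) simp
    also have "(\<integral>\<^sup>+y. ennreal (\<rho> y / \<mu>) * ennreal (exp (l * g y)) \<partial>P) = (\<integral>\<^sup>+x. ennreal (exp (l * g x)) \<partial>Q)"
      unfolding Q_def by (rule nn_integral_density[symmetric]) auto
    also have "ennreal \<mu> * \<dots> \<le> ennreal \<mu> * ennreal (exp (l\<^sup>2/8 + \<bar>l\<bar> * e/4))"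
      by (rule mult_left_mono[OF H2]) simp
    also have "\<dots> = ennreal (exp (l\<^sup>2/8 + \<bar>l\<bar> * e/4)) * (\<integral>\<^sup>+y. ennreal (\<rho> y) \<partial>P)"
      unfolding N by (simp add: mult.commute)
    finally show ?thesis .
  qed
qed



lemma pointwise_enn:
  fixes P :: "'a pmf" and \<rho> :: "'a \<Rightarrow> ennreal" and f :: "'a \<Rightarrow> real"
  assumes rr: "\<And>y y'. \<rho> y \<le> ennreal (exp e) * \<rho> y'" and e: "e \<ge> 0"
    and f01: "\<And>y. f y \<in> {0..1}"
  shows "(\<integral>\<^sup>+y. \<rho> y * ennreal (exp (l * (f y - measure_pmf.expectation P f))) \<partial>P)
          \<le> ennreal (exp (l\<^sup>2/8 + \<bar>l\<bar> * e/4)) * (\<integral>\<^sup>+y. \<rho> y \<partial>P)"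
proof (cases "\<exists>y. \<rho> y = \<top>")
  case True
  then obtain y0 where "\<rho> y0 = \<top>" by auto
  hence "\<rho> y' = \<top>" for y'
    using rr[of y0 y'] by (auto simp: top_unique ennreal_mult_eq_top_iff)
  hence "(\<integral>\<^sup>+y. \<rho> y \<partial>P) = \<top>" by (simp add: measure_pmf.emeasure_space_1)
  thus ?thesis by (simp add: ennreal_mult_eq_top_iff)
next
  case False
  define r where "r = (\<lambda>y. enn2real (\<rho> y))"
  have rr': "\<rho> y = ennreal (r y)" for y using False unfolding r_def by (cases "\<rho> y") auto
  have rpos: "r y \<ge> 0" for y unfolding r_def by simp
  have rrr: "r y \<le> exp e * r y'" for y y'
  proof -
    have "ennreal (r y) \<le> ennreal (exp e * r y')"
      using rr[of y y'] rpos[of y'] unfolding rr' by (simp add: ennreal_mult)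
    thus ?thesis using rpos by (simp add: ennreal_le_iff)
  qed
  have "(\<integral>\<^sup>+y. \<rho> y * ennreal (exp (l * (f y - measure_pmf.expectation P f))) \<partial>P)
      = (\<integral>\<^sup>+y. ennreal (r y * exp (l * (f y - measure_pmf.expectation P f))) \<partial>P)"
    by (intro nn_integral_cong) (simp add: rr' ennreal_mult rpos)
  also have "\<dots> \<le> ennreal (exp (l\<^sup>2/8 + \<bar>l\<bar> * e/4)) * (\<integral>\<^sup>+y. ennreal (r y) \<partial>P)"
    by (rule pointwise_real[OF rpos rrr e f01])
  also have "(\<integral>\<^sup>+y. ennreal (r y) \<partial>P) = (\<integral>\<^sup>+y. \<rho> y \<partial>P)" by (simp add: rr')
  finally show ?thesis .
qed



lemma AE_le_of_set_le:
  fixes f g :: "'b \<Rightarrow> ennreal"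
  assumes [measurable]: "f \<in> borel_measurable M" "g \<in> borel_measurable M"
    and fin: "integral\<^sup>N M g \<noteq> \<infinity>"
    and le: "\<And>A. A \<in> sets M \<Longrightarrow> (\<integral>\<^sup>+x. f x * indicator A x \<partial>M) \<le> (\<integral>\<^sup>+x. g x * indicator A x \<partial>M)"
  shows "AE x in M. f x \<le> g x"
proof -
  let ?P = "\<lambda>f A. \<integral>\<^sup>+x. f x * indicator A x \<partial>M"
  define N where "N = {x\<in>space M. g x < f x}"
  have N[measurable]: "N \<in> sets M" unfolding N_def by measurable
  have "?P g N \<le> integral\<^sup>N M g"
    by (intro nn_integral_mono) (auto split: split_indicator)
  hence Pg_fin: "?P g N \<noteq> \<infinity>" using fin by (auto simp: top_unique)
  have "(\<integral>\<^sup>+x. f x * indicator N x - g x * indicator N x \<partial>M) = ?P f N - ?P g N"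
  proof (rule nn_integral_diff)
    show "AE x in M. g x * indicator N x \<le> f x * indicator N x"
      unfolding N_def by (auto split: split_indicator)
  qed (use Pg_fin in auto)
  also have "\<dots> = 0" using le[OF N] Pg_fin by (simp add: diff_eq_0_iff_ennreal top.not_eq_extremum order.strict_trans1)
  finally have "AE x in M. f x * indicator N x - g x * indicator N x = 0"
    by (subst (asm) nn_integral_0_iff_AE) auto
  thus ?thesis
  proof (rule AE_mp[OF _ AE_I2])
    fix x assume "x \<in> space M"
    show "f x * indicator N x - g x * indicator N x = 0 \<longrightarrow> f x \<le> g x"
    proof
      assume a: "f x * indicator N x - g x * indicator N x = 0"
      show "f x \<le> g x"
      proof (rule ccontr)
        assume "\<not> f x \<le> g x"
        hence "x \<in> N" "g x < f x" using \<open>x \<in> space M\<close> unfolding N_def by auto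
        with a show False by (simp add: diff_eq_0_iff_ennreal not_le[symmetric])
      qed
    qed
  qed
qed



lemma eval_meas[measurable]: "(\<lambda>\<phi>. \<phi> y) \<in> borel_measurable (out_space :: ('a \<Rightarrow> real) measure)"
  unfolding out_space_def by (rule measurable_component_singleton) simp

lemma pmf_swap:
  fixes P :: "'a::countable pmf" and f :: "'a \<Rightarrow> 'b \<Rightarrow> ennreal"
  assumes M: "prob_space M" and fm: "\<And>y. f y \<in> borel_measurable M"
  shows "(\<integral>\<^sup>+y. \<integral>\<^sup>+x. f y x \<partial>M \<partial>P) = (\<integral>\<^sup>+x. \<integral>\<^sup>+y. f y x \<partial>P \<partial>M)"
proof -
  interpret pair_sigma_finite "measure_pmf P" M
    by (intro pair_sigma_finite.intro prob_space_imp_sigma_finite measure_pmf.prob_space_axioms M)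
  have "(\<lambda>p. f (fst p) (snd p)) \<in> borel_measurable (measure_pmf P \<Otimes>\<^sub>M M)"
  proof (rule measurable_compose_countable[where f="\<lambda>y p. f y (snd p)" and g=fst])
    fix y show "(\<lambda>p. f y (snd p)) \<in> borel_measurable (measure_pmf P \<Otimes>\<^sub>M M)"
      using fm[of y] by measurable
  next
    show "fst \<in> measurable (measure_pmf P \<Otimes>\<^sub>M M) (count_space UNIV)"
      by (rule measurable_compose[OF measurable_fst]) simp
  qed
  hence "case_prod f \<in> borel_measurable (measure_pmf P \<Otimes>\<^sub>M M)" by (simp add: case_prod_beta)
  from Fubini'[OF this] show ?thesis by simp
qed

lemma step:
  fixes \<mu> :: "'a::countable \<Rightarrow> ('a \<Rightarrow> real) measure" and P :: "'a pmf"
    and R :: "('a \<Rightarrow> real) \<Rightarrow> ennreal" and pm :: "('a \<Rightarrow> real) \<Rightarrow> real"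
  assumes sets: "\<And>y. sets (\<mu> y) = sets out_space"
    and prob: "\<And>y. prob_space (\<mu> y)"
    and dp: "\<And>y y' X. X \<in> sets out_space \<Longrightarrow> measure (\<mu> y) X \<le> exp e * measure (\<mu> y') X"
    and e: "e \<ge> 0"
    and bnd: "\<And>y. AE \<phi> in \<mu> y. \<forall>z. \<phi> z \<in> {0..1}"
    and Rm[measurable]: "R \<in> borel_measurable out_space"
    and pmm[measurable]: "pm \<in> borel_measurable out_space"
    and pmeq: "\<And>\<phi>. (\<forall>z. \<phi> z \<in> {0..1}) \<Longrightarrow> pm \<phi> = measure_pmf.expectation P \<phi>"
  shows "(\<integral>\<^sup>+y. \<integral>\<^sup>+\<phi>. ennreal (exp (l * (\<phi> y - pm \<phi>))) * R \<phi> \<partial>\<mu> y \<partial>P)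
          \<le> ennreal (exp (l\<^sup>2/8 + \<bar>l\<bar> * e/4)) * (\<integral>\<^sup>+y. \<integral>\<^sup>+\<phi>. R \<phi> \<partial>\<mu> y \<partial>P)"
proof -
  define C where "C = ennreal (exp (l\<^sup>2/8 + \<bar>l\<bar> * e/4))"
  define \<nu> where "\<nu> = \<mu> undefined"
  interpret \<nu>: prob_space \<nu> unfolding \<nu>_def by (rule prob)
  have sn: "sets \<nu> = sets out_space" unfolding \<nu>_def by (rule sets)
  have sy: "sets (\<mu> y) = sets \<nu>" for y using sets sn by simp
  have mn: "measurable \<nu> (borel :: ennreal measure) = measurable out_space borel"
    by (rule measurable_cong_sets[OF sn refl])
  have ac: "absolutely_continuous \<nu> (\<mu> y)" for y
    unfolding absolutely_continuous_def
  proof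
    fix X assume X: "X \<in> null_sets \<nu>"
    hence Xs: "X \<in> sets out_space" "emeasure \<nu> X = 0" using sn by auto
    interpret my: prob_space "\<mu> y" by (rule prob)
    have "measure (\<mu> y) X \<le> exp e * measure \<nu> X" unfolding \<nu>_def by (rule dp[OF Xs(1)])
    also have "measure \<nu> X = 0" using Xs(2) by (simp add: \<nu>.emeasure_eq_measure)
    finally have "measure (\<mu> y) X = 0" using measure_nonneg[of "\<mu> y" X] by simp
    thus "X \<in> null_sets (\<mu> y)" using Xs sets[of y] by (simp add: my.emeasure_eq_measure null_sets_def)
  qed
  define r where "r = (\<lambda>y. RN_deriv \<nu> (\<mu> y))"
  have rm[measurable]: "r y \<in> borel_measurable out_space" for y
    unfolding r_def using borel_measurable_RN_deriv[of \<nu> "\<mu> y"] mn by simp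
  have I1: "integral\<^sup>N (\<mu> y) F = (\<integral>\<^sup>+\<phi>. r y \<phi> * F \<phi> \<partial>\<nu>)" if "F \<in> borel_measurable out_space" for y F
    unfolding r_def by (rule \<nu>.RN_deriv_nn_integral[OF ac sy]) (use that mn in simp)
  have em: "emeasure (\<mu> y) A = (\<integral>\<^sup>+\<phi>. r y \<phi> * indicator A \<phi> \<partial>\<nu>)" if "A \<in> sets out_space" for y A
  proof -
    have "emeasure (\<mu> y) A = integral\<^sup>N (\<mu> y) (indicator A)"
      using that sets[of y] by simp
    also have "\<dots> = (\<integral>\<^sup>+\<phi>. r y \<phi> * indicator A \<phi> \<partial>\<nu>)" by (rule I1) (use that in simp)
    finally show ?thesis .
  qed
  have pw: "AE \<phi> in \<nu>. r y \<phi> \<le> ennreal (exp e) * r y' \<phi>" for y y'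
  proof (rule AE_le_of_set_le)
    show "r y \<in> borel_measurable \<nu>" "(\<lambda>\<phi>. ennreal (exp e) * r y' \<phi>) \<in> borel_measurable \<nu>"
      using mn by simp_all
    have "(\<integral>\<^sup>+\<phi>. ennreal (exp e) * r y' \<phi> \<partial>\<nu>) = ennreal (exp e) * (\<integral>\<^sup>+\<phi>. r y' \<phi> * indicator (space out_space) \<phi> \<partial>\<nu>)"
    proof -
      have "(\<integral>\<^sup>+\<phi>. r y' \<phi> * indicator (space out_space) \<phi> \<partial>\<nu>) = (\<integral>\<^sup>+\<phi>. r y' \<phi> \<partial>\<nu>)"
        using sets_eq_imp_space_eq[OF sn] by (intro nn_integral_cong) (simp add: indicator_def)
      thus ?thesis by (simp add: nn_integral_cmult mn)
    qed
    also have "\<dots> = ennreal (exp e) * emeasure (\<mu> y') (space out_space)" by (simp add: em)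
    also have "\<dots> < \<infinity>"
      using prob_space.emeasure_space_1[OF prob[of y']] sets_eq_imp_space_eq[OF sets[of y']]
      by (simp add: ennreal_mult_less_top)
    finally show "(\<integral>\<^sup>+\<phi>. ennreal (exp e) * r y' \<phi> \<partial>\<nu>) \<noteq> \<infinity>" by simp
  next
    fix A assume A: "A \<in> sets \<nu>"
    hence As: "A \<in> sets out_space" using sn by simp
    have "(\<integral>\<^sup>+\<phi>. r y \<phi> * indicator A \<phi> \<partial>\<nu>) = emeasure (\<mu> y) A" by (simp add: em As)
    also have "\<dots> = ennreal (measure (\<mu> y) A)"
      using finite_measure.emeasure_eq_measure[OF prob_space.finite_measure[OF prob]] by simp
    also have "\<dots> \<le> ennreal (exp e * measure (\<mu> y') A)" by (rule ennreal_leI) (rule dp[OF As])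
    also have "\<dots> = ennreal (exp e) * emeasure (\<mu> y') A"
      using finite_measure.emeasure_eq_measure[OF prob_space.finite_measure[OF prob]] by (simp add: ennreal_mult)
    also have "\<dots> = ennreal (exp e) * (\<integral>\<^sup>+\<phi>. r y' \<phi> * indicator A \<phi> \<partial>\<nu>)" by (simp add: em As)
    also have "\<dots> = (\<integral>\<^sup>+\<phi>. ennreal (exp e) * r y' \<phi> * indicator A \<phi> \<partial>\<nu>)"
      using As mn by (subst nn_integral_cmult[symmetric]) (auto simp: mult.assoc)
    finally show "(\<integral>\<^sup>+\<phi>. r y \<phi> * indicator A \<phi> \<partial>\<nu>) \<le> (\<integral>\<^sup>+\<phi>. ennreal (exp e) * r y' \<phi> * indicator A \<phi> \<partial>\<nu>)" .
  qed
  have pwall: "AE \<phi> in \<nu>. \<forall>y y'. r y \<phi> \<le> ennreal (exp e) * r y' \<phi>"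
    using pw by (simp add: AE_all_countable)
  have bnu: "AE \<phi> in \<nu>. \<forall>z. \<phi> z \<in> {0..1}" unfolding \<nu>_def by (rule bnd)
  define w where "w = (\<lambda>\<phi> y. ennreal (exp (l * (\<phi> y - pm \<phi>))))"
  have wm[measurable]: "(\<lambda>\<phi>. w \<phi> y) \<in> borel_measurable out_space" for y unfolding w_def by measurable
  have "(\<integral>\<^sup>+y. \<integral>\<^sup>+\<phi>. ennreal (exp (l * (\<phi> y - pm \<phi>))) * R \<phi> \<partial>\<mu> y \<partial>P)
      = (\<integral>\<^sup>+y. \<integral>\<^sup>+\<phi>. r y \<phi> * (w \<phi> y * R \<phi>) \<partial>\<nu> \<partial>P)"
    unfolding w_def by (intro nn_integral_cong I1) measurable
  also have "\<dots> = (\<integral>\<^sup>+\<phi>. \<integral>\<^sup>+y. r y \<phi> * (w \<phi> y * R \<phi>) \<partial>P \<partial>\<nu>)"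
    by (rule pmf_swap) (use mn in \<open>simp_all add: \<nu>.prob_space_axioms\<close>)
  also have "\<dots> = (\<integral>\<^sup>+\<phi>. R \<phi> * (\<integral>\<^sup>+y. r y \<phi> * w \<phi> y \<partial>P) \<partial>\<nu>)"
    by (intro nn_integral_cong) (simp add: nn_integral_cmult[symmetric] mult_ac)
  also have "\<dots> \<le> (\<integral>\<^sup>+\<phi>. R \<phi> * (C * (\<integral>\<^sup>+y. r y \<phi> \<partial>P)) \<partial>\<nu>)"
  proof (rule nn_integral_mono_AE)
    show "AE \<phi> in \<nu>. R \<phi> * (\<integral>\<^sup>+y. r y \<phi> * w \<phi> y \<partial>P) \<le> R \<phi> * (C * (\<integral>\<^sup>+y. r y \<phi> \<partial>P))"
      using pwall bnu
    proof eventually_elim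
      case (elim \<phi>)
      have "(\<integral>\<^sup>+y. r y \<phi> * w \<phi> y \<partial>P) \<le> C * (\<integral>\<^sup>+y. r y \<phi> \<partial>P)"
        unfolding w_def C_def pmeq[OF elim(2)]
        by (rule pointwise_enn) (use elim e in auto)
      thus ?case by (rule mult_left_mono) simp
    qed
  qed
  also have "\<dots> = C * (\<integral>\<^sup>+\<phi>. \<integral>\<^sup>+y. r y \<phi> * R \<phi> \<partial>P \<partial>\<nu>)"
    by (subst nn_integral_cmult[symmetric]) (auto intro!: nn_integral_cong simp: nn_integral_cmult[symmetric] mn mult_ac)
  also have "(\<integral>\<^sup>+\<phi>. \<integral>\<^sup>+y. r y \<phi> * R \<phi> \<partial>P \<partial>\<nu>) = (\<integral>\<^sup>+y. \<integral>\<^sup>+\<phi>. r y \<phi> * R \<phi> \<partial>\<nu> \<partial>P)"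
    by (rule pmf_swap[symmetric]) (use mn in \<open>simp_all add: \<nu>.prob_space_axioms\<close>)
  also have "\<dots> = (\<integral>\<^sup>+y. \<integral>\<^sup>+\<phi>. R \<phi> \<partial>\<mu> y \<partial>P)"
    by (intro nn_integral_cong I1[symmetric]) simp
  finally show ?thesis unfolding C_def .
qed



lemma adjacent_mid:
  assumes "y \<noteq> y'"
  shows "adjacent (pre @ y # s) (pre @ y' # s)"
proof -
  have "{i. i < length (pre @ y # s) \<and> (pre @ y # s) ! i \<noteq> (pre @ y' # s) ! i} = {length pre}"
  proof (intro set_eqI iffI)
    fix i assume "i \<in> {i. i < length (pre @ y # s) \<and> (pre @ y # s) ! i \<noteq> (pre @ y' # s) ! i}"
    hence i: "i < length (pre @ y # s)" "(pre @ y # s) ! i \<noteq> (pre @ y' # s) ! i" by auto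
    show "i \<in> {length pre}"
    proof (rule ccontr)
      assume "i \<notin> {length pre}"
      hence "i < length pre \<or> i > length pre" by auto
      thus False
      proof
        assume "i < length pre" thus False using i by (simp add: nth_append)
      next
        assume "i > length pre"
        then obtain k where "i = Suc (length pre + k)" by (metis less_imp_Suc_add)
        thus False using i by (simp add: nth_append)
      qed
    qed
  qed (use assms in \<open>auto simp: nth_append\<close>)
  thus ?thesis unfolding adjacent_def by simp
qed

lemma hybrid:
  fixes A :: "'a::countable list \<Rightarrow> ('a \<Rightarrow> real) measure" and P :: "'a pmf"
    and pm :: "('a \<Rightarrow> real) \<Rightarrow> real"
  assumes alg: "is_algorithm n A"
    and bnd: "\<And>x. length x = n \<Longrightarrow> AE \<phi> in A x. \<forall>z. \<phi> z \<in> {0..1}"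
    and dp: "differentially_private e n A" and e: "e \<ge> 0"
    and pmm[measurable]: "pm \<in> borel_measurable out_space"
    and pmeq: "\<And>\<phi>. (\<forall>z. \<phi> z \<in> {0..1}) \<Longrightarrow> pm \<phi> = measure_pmf.expectation P \<phi>"
  shows "length pre + j = n \<Longrightarrow> R \<in> borel_measurable out_space \<Longrightarrow>
    (\<integral>\<^sup>+suf. \<integral>\<^sup>+\<phi>. prod_list (map (\<lambda>z. ennreal (exp (l * (\<phi> z - pm \<phi>)))) suf) * R \<phi> \<partial>A (pre @ suf) \<partial>replicate_pmf j P)
     \<le> ennreal (exp (l\<^sup>2/8 + \<bar>l\<bar> * e/4)) ^ j * (\<integral>\<^sup>+suf. \<integral>\<^sup>+\<phi>. R \<phi> \<partial>A (pre @ suf) \<partial>replicate_pmf j P)"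
proof (induction j arbitrary: pre R)
  case 0
  thus ?case by simp
next
  case (Suc j)
  note Rm[measurable] = Suc.prems(2)
  define C where "C = ennreal (exp (l\<^sup>2/8 + \<bar>l\<bar> * e/4))"
  define w where "w = (\<lambda>\<phi> z. ennreal (exp (l * (\<phi> z - pm \<phi>))))"
  have wm[measurable]: "(\<lambda>\<phi>. w \<phi> y) \<in> borel_measurable out_space" for y unfolding w_def by measurable
  let ?Pi = "\<lambda>\<phi> s. prod_list (map (w \<phi>) s)"
  have "(\<integral>\<^sup>+suf. \<integral>\<^sup>+\<phi>. ?Pi \<phi> suf * R \<phi> \<partial>A (pre @ suf) \<partial>replicate_pmf (Suc j) P)
      = (\<integral>\<^sup>+y. \<integral>\<^sup>+s. \<integral>\<^sup>+\<phi>. ?Pi \<phi> s * (w \<phi> y * R \<phi>) \<partial>A ((pre @ [y]) @ s) \<partial>replicate_pmf j P \<partial>P)"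
    by (simp add: mult_ac)
  also have "\<dots> \<le> (\<integral>\<^sup>+y. C ^ j * \<integral>\<^sup>+s. \<integral>\<^sup>+\<phi>. w \<phi> y * R \<phi> \<partial>A ((pre @ [y]) @ s) \<partial>replicate_pmf j P \<partial>P)"
  proof (intro nn_integral_mono)
    fix y
    show "(\<integral>\<^sup>+s. \<integral>\<^sup>+\<phi>. ?Pi \<phi> s * (w \<phi> y * R \<phi>) \<partial>A ((pre @ [y]) @ s) \<partial>replicate_pmf j P)
        \<le> C ^ j * \<integral>\<^sup>+s. \<integral>\<^sup>+\<phi>. w \<phi> y * R \<phi> \<partial>A ((pre @ [y]) @ s) \<partial>replicate_pmf j P"
      unfolding C_def w_def using Suc.IH[of "pre @ [y]" "\<lambda>\<phi>. w \<phi> y * R \<phi>"] Suc.prems(1)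
      by (simp add: w_def)
  qed
  also have "\<dots> = C ^ j * (\<integral>\<^sup>+s. \<integral>\<^sup>+y. \<integral>\<^sup>+\<phi>. w \<phi> y * R \<phi> \<partial>A (pre @ y # s) \<partial>P \<partial>replicate_pmf j P)"
  proof -
    have "(\<integral>\<^sup>+y. C ^ j * \<integral>\<^sup>+s. \<integral>\<^sup>+\<phi>. w \<phi> y * R \<phi> \<partial>A ((pre @ [y]) @ s) \<partial>replicate_pmf j P \<partial>P)
       = C ^ j * (\<integral>\<^sup>+y. \<integral>\<^sup>+s. \<integral>\<^sup>+\<phi>. w \<phi> y * R \<phi> \<partial>A (pre @ y # s) \<partial>replicate_pmf j P \<partial>P)"
      by (subst nn_integral_cmult) simp_all
    also have "(\<integral>\<^sup>+y. \<integral>\<^sup>+s. \<integral>\<^sup>+\<phi>. w \<phi> y * R \<phi> \<partial>A (pre @ y # s) \<partial>replicate_pmf j P \<partial>P)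
       = (\<integral>\<^sup>+s. \<integral>\<^sup>+y. \<integral>\<^sup>+\<phi>. w \<phi> y * R \<phi> \<partial>A (pre @ y # s) \<partial>P \<partial>replicate_pmf j P)"
      by (rule pmf_swap[OF measure_pmf.prob_space_axioms]) simp
    finally show ?thesis .
  qed
  also have "\<dots> \<le> C ^ j * (\<integral>\<^sup>+s. C * \<integral>\<^sup>+y. \<integral>\<^sup>+\<phi>. R \<phi> \<partial>A (pre @ y # s) \<partial>P \<partial>replicate_pmf j P)"
  proof (intro mult_left_mono nn_integral_mono_AE)
    show "AE s in replicate_pmf j P. (\<integral>\<^sup>+y. \<integral>\<^sup>+\<phi>. w \<phi> y * R \<phi> \<partial>A (pre @ y # s) \<partial>P)
           \<le> C * \<integral>\<^sup>+y. \<integral>\<^sup>+\<phi>. R \<phi> \<partial>A (pre @ y # s) \<partial>P"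
    proof (rule AE_pmfI)
      fix s assume "s \<in> set_pmf (replicate_pmf j P)"
      hence len: "length (pre @ y # s) = n" for y using Suc.prems(1) by (simp add: set_replicate_pmf)
      show "(\<integral>\<^sup>+y. \<integral>\<^sup>+\<phi>. w \<phi> y * R \<phi> \<partial>A (pre @ y # s) \<partial>P) \<le> C * \<integral>\<^sup>+y. \<integral>\<^sup>+\<phi>. R \<phi> \<partial>A (pre @ y # s) \<partial>P"
        unfolding w_def C_def
      proof (rule step[where e=e])
        fix y show "sets (A (pre @ y # s)) = sets out_space" using alg len unfolding is_algorithm_def by blast
        fix y show "prob_space (A (pre @ y # s))" using alg len unfolding is_algorithm_def by blast
        fix y show "AE \<phi> in A (pre @ y # s). \<forall>z. \<phi> z \<in> {0..1}" by (rule bnd[OF len])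
      next
        fix y y' and X :: "('a \<Rightarrow> real) set" assume X: "X \<in> sets out_space"
        show "measure (A (pre @ y # s)) X \<le> exp e * measure (A (pre @ y' # s)) X"
        proof (cases "y = y'")
          case True
          thus ?thesis using e measure_nonneg[of "A (pre @ y' # s)" X]
            by (simp add: mult_le_cancel_right1)
        next
          case False
          thus ?thesis using dp X len[of y] len[of y'] adjacent_mid[OF False, of pre s]
            unfolding differentially_private_def by blast
        qed
      qed (use e pmeq in auto)
    qed
  qed simp
  also have "\<dots> = C ^ Suc j * (\<integral>\<^sup>+s. \<integral>\<^sup>+y. \<integral>\<^sup>+\<phi>. R \<phi> \<partial>A (pre @ y # s) \<partial>P \<partial>replicate_pmf j P)"
    by (subst nn_integral_cmult) (simp_all add: mult_ac)
  also have "(\<integral>\<^sup>+s. \<integral>\<^sup>+y. \<integral>\<^sup>+\<phi>. R \<phi> \<partial>A (pre @ y # s) \<partial>P \<partial>replicate_pmf j P)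
      = (\<integral>\<^sup>+suf. \<integral>\<^sup>+\<phi>. R \<phi> \<partial>A (pre @ suf) \<partial>replicate_pmf (Suc j) P)"
  proof -
    have "(\<integral>\<^sup>+suf. \<integral>\<^sup>+\<phi>. R \<phi> \<partial>A (pre @ suf) \<partial>replicate_pmf (Suc j) P)
       = (\<integral>\<^sup>+y. \<integral>\<^sup>+s. \<integral>\<^sup>+\<phi>. R \<phi> \<partial>A (pre @ y # s) \<partial>replicate_pmf j P \<partial>P)" by simp
    also have "\<dots> = (\<integral>\<^sup>+s. \<integral>\<^sup>+y. \<integral>\<^sup>+\<phi>. R \<phi> \<partial>A (pre @ y # s) \<partial>P \<partial>replicate_pmf j P)"
      by (rule pmf_swap[OF measure_pmf.prob_space_axioms]) simp
    finally show ?thesis by simp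
  qed
  finally show ?case unfolding C_def w_def .
qed



lemma prodexp:
  "prod_list (map (\<lambda>z. ennreal (exp (l * g z))) S) = ennreal (exp (l * sum_list (map g S)))"
  by (induction S) (simp_all add: distrib_left exp_add ennreal_mult)

lemma sum_list_minus_const:
  "sum_list (map (\<lambda>z. f z - c) S) = sum_list (map f S) - real (length S) * (c::real)"
  by (induction S) (simp_all add: algebra_simps)

definition pmr :: "'a pmf \<Rightarrow> ('a \<Rightarrow> real) \<Rightarrow> real" where
  "pmr P \<phi> = enn2real (\<integral>\<^sup>+y. ennreal (\<phi> y) \<partial>P)"

lemma pmr_meas[measurable]: "pmr (P :: 'a::countable pmf) \<in> borel_measurable out_space"
proof -
  have "(\<lambda>p. ennreal (fst p (snd p))) \<in> borel_measurable (out_space \<Otimes>\<^sub>M measure_pmf P)"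
  proof (rule measurable_compose_countable[where f="\<lambda>y p. ennreal (fst p y)" and g=snd])
    fix y show "(\<lambda>p. ennreal (fst p y)) \<in> borel_measurable (out_space \<Otimes>\<^sub>M measure_pmf P)"
      by measurable
  next
    show "snd \<in> measurable (out_space \<Otimes>\<^sub>M measure_pmf P) (count_space UNIV)"
      by (rule measurable_compose[OF measurable_snd]) simp
  qed
  hence "(\<lambda>(\<phi>, y). ennreal (\<phi> y)) \<in> borel_measurable (out_space \<Otimes>\<^sub>M measure_pmf P)"
    by (simp add: case_prod_beta)
  hence "(\<lambda>\<phi>. \<integral>\<^sup>+y. ennreal (\<phi> y) \<partial>P) \<in> borel_measurable out_space"
    by (rule measure_pmf.borel_measurable_nn_integral)
  thus ?thesis unfolding pmr_def[abs_def] by measurable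
qed

lemma pmr_eq:
  assumes "\<forall>z. \<phi> z \<in> {0..1}"
  shows "pmr P \<phi> = pop_mean P \<phi>"
proof -
  have i: "integrable (measure_pmf P) \<phi>"
    by (rule pmf_integrable_bounded[where B=1]) (use assms in auto)
  have "(\<integral>\<^sup>+y. ennreal (\<phi> y) \<partial>P) = ennreal (measure_pmf.expectation P \<phi>)"
    by (rule nn_integral_eq_integral[OF i]) (use assms in auto)
  moreover have "measure_pmf.expectation P \<phi> \<ge> 0"
    by (rule Bochner_Integration.integral_nonneg) (use assms in auto)
  ultimately show ?thesis unfolding pmr_def pop_mean_def by simp
qed



lemma mgf:
  fixes A :: "'a::countable list \<Rightarrow> ('a \<Rightarrow> real) measure" and P :: "'a pmf"
  assumes alg: "is_algorithm n A"
    and bnd: "\<And>x. length x = n \<Longrightarrow> AE \<phi> in A x. \<forall>z. \<phi> z \<in> {0..1}"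
    and dp: "differentially_private e n A" and e: "e \<ge> 0"
  shows "(\<integral>\<^sup>+S. \<integral>\<^sup>+\<phi>. ennreal (exp (l * sum_list (map (\<lambda>z. \<phi> z - pmr P \<phi>) S))) \<partial>A S \<partial>replicate_pmf n P)
          \<le> ennreal (exp (l\<^sup>2/8 + \<bar>l\<bar> * e/4)) ^ n"
proof -
  have H: "(\<integral>\<^sup>+suf. \<integral>\<^sup>+\<phi>. prod_list (map (\<lambda>z. ennreal (exp (l * (\<phi> z - pmr P \<phi>)))) suf) * 1 \<partial>A ([] @ suf) \<partial>replicate_pmf n P)
     \<le> ennreal (exp (l\<^sup>2/8 + \<bar>l\<bar> * e/4)) ^ n * (\<integral>\<^sup>+suf. \<integral>\<^sup>+\<phi>. 1 \<partial>A ([] @ suf) \<partial>replicate_pmf n P)"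
    by (rule hybrid[OF alg bnd dp e pmr_meas pmr_eq[unfolded pop_mean_def]]) auto
  have one: "(\<integral>\<^sup>+suf. \<integral>\<^sup>+\<phi>. 1 \<partial>A ([] @ suf) \<partial>replicate_pmf n P) = 1"
  proof -
    have "(\<integral>\<^sup>+suf. \<integral>\<^sup>+\<phi>. 1 \<partial>A ([] @ suf) \<partial>replicate_pmf n P) = (\<integral>\<^sup>+suf. 1 \<partial>replicate_pmf n P)"
    proof (rule nn_integral_cong_AE, rule AE_pmfI)
      fix suf assume "suf \<in> set_pmf (replicate_pmf n P)"
      hence "length suf = n" by (simp add: set_replicate_pmf)
      hence "prob_space (A suf)" using alg unfolding is_algorithm_def by blast
      thus "(\<integral>\<^sup>+\<phi>. 1 \<partial>A ([] @ suf)) = 1" by (simp add: prob_space.emeasure_space_1)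
    qed
    thus ?thesis by (simp add: measure_pmf.emeasure_space_1)
  qed
  show ?thesis using H unfolding one by (simp add: prodexp)
qed



lemma sum_meas[measurable]:
  "(\<lambda>\<phi>. sum_list (map (\<lambda>z. \<phi> z - pmr (P :: 'a::countable pmf) \<phi>) S)) \<in> borel_measurable out_space"
  by (induction S) simp_all

lemma key_real:
  fixes l n t s :: real
  assumes "l > 0" "n > 0" "\<bar>s\<bar> > n * t"
  shows "1 \<le> exp (-(l*n*t)) * (exp (l * s) + exp (-l * s))"
proof (cases "s > n * t")
  case True
  hence "l * (n * t) \<le> l * s" using assms by (intro mult_left_mono) auto
  hence "0 \<le> -(l*n*t) + l * s" by (simp add: algebra_simps)
  hence "1 \<le> exp (-(l*n*t) + l * s)" by simp
  hence "1 \<le> exp (-(l*n*t)) * exp (l * s)" by (simp only: exp_add)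
  also have "\<dots> \<le> exp (-(l*n*t)) * (exp (l * s) + exp (-l * s))" by (intro mult_left_mono) auto
  finally show ?thesis .
next
  case False
  hence "-s > n * t" using assms by auto
  hence "l * (n * t) \<le> l * (-s)" using assms by (intro mult_left_mono) auto
  hence "0 \<le> -(l*n*t) + (-l * s)" by (simp add: algebra_simps)
  hence "1 \<le> exp (-(l*n*t) + (-l * s))" by simp
  hence "1 \<le> exp (-(l*n*t)) * exp (-l * s)" by (simp only: exp_add)
  also have "\<dots> \<le> exp (-(l*n*t)) * (exp (l * s) + exp (-l * s))" by (intro mult_left_mono) auto
  finally show ?thesis .
qed

theorem corollary4p2:
  fixes A :: "'a::countable list \<Rightarrow> ('a \<Rightarrow> real) measure"
    and P :: "'a pmf" and n :: nat and \<epsilon> \<tau> :: real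
  assumes "n > 0"
    and "is_algorithm n A"
    and "\<And>x. length x = n \<Longrightarrow> AE \<phi> in A x. \<forall>z. \<phi> z \<in> {0..1}"
    and "differentially_private \<epsilon> n A"
    and "\<tau> > 0"
    and "\<epsilon> \<le> sqrt (\<tau>\<^sup>2 - ln 2 / (2 * real n))"
  shows "measure_pmf.expectation (replicate_pmf n P)
           (\<lambda>S. measure (A S) {\<phi> \<in> space (A S). \<bar>pop_mean P \<phi> - emp_mean S \<phi>\<bar> > \<tau>})
         \<le> 3 * sqrt 2 * exp (- (\<tau>\<^sup>2 * real n))"
proof -
  note npos = assms(1) and alg = assms(2) and bnd = assms(3) and dp = assms(4) and tpos = assms(5)
  define e where "e = max \<epsilon> 0"
  have e0: "e \<ge> 0" unfolding e_def by simp
  have dp0: "differentially_private e n A"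
    unfolding differentially_private_def
  proof (intro allI impI)
    fix x y :: "'a list" and T :: "('a \<Rightarrow> real) set" assume a: "length x = n \<and> length y = n \<and> adjacent x y \<and> T \<in> sets out_space"
    hence "measure (A x) T \<le> exp \<epsilon> * measure (A y) T" using dp unfolding differentially_private_def by blast
    also have "\<dots> \<le> exp e * measure (A y) T"
      unfolding e_def by (intro mult_right_mono) auto
    finally show "measure (A x) T \<le> exp e * measure (A y) T" .
  qed
  have "ln 2 / (2 * real n) \<ge> 0" by simp
  hence "sqrt (\<tau>\<^sup>2 - ln 2 / (2 * real n)) \<le> sqrt (\<tau>\<^sup>2)" by (intro real_sqrt_le_mono) simp
  hence "\<epsilon> \<le> \<tau>" using assms(6) tpos by simp
  hence et: "e \<le> \<tau>" unfolding e_def using tpos by simp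
  define l where "l = 4 * \<tau> - e"
  have lpos: "l > 0" and l3: "l \<ge> 3 * \<tau>" unfolding l_def using et tpos by auto
  define C where "C = ennreal (exp (l\<^sup>2/8 + \<bar>l\<bar> * e/4))"
  define Sg where "Sg = (\<lambda>S \<phi>. sum_list (map (\<lambda>z. \<phi> z - pmr P \<phi>) S))"
  define X where "X = (\<lambda>S. {\<phi> \<in> space (A S). \<bar>pop_mean P \<phi> - emp_mean S \<phi>\<bar> > \<tau>})"
  define a where "a = exp (-(l * real n * \<tau>))"
  have M1: "(\<integral>\<^sup>+S. \<integral>\<^sup>+\<phi>. ennreal (exp (l * Sg S \<phi>)) \<partial>A S \<partial>replicate_pmf n P) \<le> C ^ n"
    unfolding C_def Sg_def by (rule mgf[OF alg bnd dp0 e0])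
  have M2: "(\<integral>\<^sup>+S. \<integral>\<^sup>+\<phi>. ennreal (exp (-l * Sg S \<phi>)) \<partial>A S \<partial>replicate_pmf n P) \<le> C ^ n"
    using mgf[OF alg bnd dp0 e0, where l="-l" and P=P] unfolding C_def Sg_def by simp
  have perS: "ennreal (measure (A S) (X S)) \<le> ennreal a * ((\<integral>\<^sup>+\<phi>. ennreal (exp (l * Sg S \<phi>)) \<partial>A S) + (\<integral>\<^sup>+\<phi>. ennreal (exp (-l * Sg S \<phi>)) \<partial>A S))"
    if len: "length S = n" for S
  proof (cases "X S \<in> sets (A S)")
    case False
    thus ?thesis by (simp add: measure_notin_sets)
  next
    case True
    interpret AS: prob_space "A S" using alg len unfolding is_algorithm_def by blast
    have sS: "sets (A S) = sets out_space" using alg len unfolding is_algorithm_def by blast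
    have mS: "measurable (A S) (borel :: ennreal measure) = measurable out_space borel"
      by (rule measurable_cong_sets[OF sS refl])
    have "ennreal (measure (A S) (X S)) = (\<integral>\<^sup>+\<phi>. indicator (X S) \<phi> \<partial>A S)"
      using True by (simp add: AS.emeasure_eq_measure)
    also have "\<dots> \<le> (\<integral>\<^sup>+\<phi>. ennreal (a * (exp (l * Sg S \<phi>) + exp (-l * Sg S \<phi>))) \<partial>A S)"
    proof (rule nn_integral_mono_AE)
      show "AE \<phi> in A S. indicator (X S) \<phi> \<le> ennreal (a * (exp (l * Sg S \<phi>) + exp (-l * Sg S \<phi>)))"
        using bnd[OF len]
      proof eventually_elim
        case (elim \<phi>)
        show ?case
        proof (cases "\<phi> \<in> X S")
          case False thus ?thesis by simp
        next
          case True
          hence t: "\<bar>pop_mean P \<phi> - emp_mean S \<phi>\<bar> > \<tau>" unfolding X_def by simp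
          have pe: "pop_mean P \<phi> = pmr P \<phi>" using pmr_eq[OF elim] by simp
          have "Sg S \<phi> = sum_list (map \<phi> S) - real n * pmr P \<phi>"
            unfolding Sg_def sum_list_minus_const len ..
          also have "\<dots> = real n * (emp_mean S \<phi> - pmr P \<phi>)"
            unfolding emp_mean_def len using npos by (simp add: field_simps)
          finally have sg: "Sg S \<phi> = real n * (emp_mean S \<phi> - pmr P \<phi>)" .
          have "\<bar>Sg S \<phi>\<bar> > real n * \<tau>"
          proof -
            have "\<bar>Sg S \<phi>\<bar> = real n * \<bar>pop_mean P \<phi> - emp_mean S \<phi>\<bar>"
              unfolding sg pe by (simp add: abs_mult abs_minus_commute)
            thus ?thesis using t npos by simp
          qed
          hence "1 \<le> a * (exp (l * Sg S \<phi>) + exp (-l * Sg S \<phi>))"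
            unfolding a_def using key_real[OF lpos, of "real n" \<tau> "Sg S \<phi>"] npos by simp
          thus ?thesis using True by simp
        qed
      qed
    qed
    also have "\<dots> = (\<integral>\<^sup>+\<phi>. ennreal a * (ennreal (exp (l * Sg S \<phi>)) + ennreal (exp (-l * Sg S \<phi>))) \<partial>A S)"
      unfolding a_def by (intro nn_integral_cong) (simp add: ennreal_mult ennreal_plus)
    also have "\<dots> = ennreal a * (\<integral>\<^sup>+\<phi>. ennreal (exp (l * Sg S \<phi>)) + ennreal (exp (-l * Sg S \<phi>)) \<partial>A S)"
      by (rule nn_integral_cmult) (use mS in \<open>simp add: Sg_def\<close>)
    also have "(\<integral>\<^sup>+\<phi>. ennreal (exp (l * Sg S \<phi>)) + ennreal (exp (-l * Sg S \<phi>)) \<partial>A S)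
        = (\<integral>\<^sup>+\<phi>. ennreal (exp (l * Sg S \<phi>)) \<partial>A S) + (\<integral>\<^sup>+\<phi>. ennreal (exp (-l * Sg S \<phi>)) \<partial>A S)"
      by (rule nn_integral_add) (use mS in \<open>simp_all add: Sg_def\<close>)
    finally show ?thesis .
  qed
  let ?F = "\<lambda>S. measure (A S) {\<phi> \<in> space (A S). \<bar>pop_mean P \<phi> - emp_mean S \<phi>\<bar> > \<tau>}"
  have "(\<integral>\<^sup>+S. ennreal (?F S) \<partial>replicate_pmf n P)
      \<le> (\<integral>\<^sup>+S. ennreal a * ((\<integral>\<^sup>+\<phi>. ennreal (exp (l * Sg S \<phi>)) \<partial>A S) + (\<integral>\<^sup>+\<phi>. ennreal (exp (-l * Sg S \<phi>)) \<partial>A S)) \<partial>replicate_pmf n P)"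
  proof (rule nn_integral_mono_AE, rule AE_pmfI)
    fix S assume "S \<in> set_pmf (replicate_pmf n P)"
    hence "length S = n" by (simp add: set_replicate_pmf)
    thus "ennreal (?F S) \<le> ennreal a * ((\<integral>\<^sup>+\<phi>. ennreal (exp (l * Sg S \<phi>)) \<partial>A S) + (\<integral>\<^sup>+\<phi>. ennreal (exp (-l * Sg S \<phi>)) \<partial>A S))"
      using perS unfolding X_def by blast
  qed
  also have "\<dots> = ennreal a * ((\<integral>\<^sup>+S. \<integral>\<^sup>+\<phi>. ennreal (exp (l * Sg S \<phi>)) \<partial>A S \<partial>replicate_pmf n P) + (\<integral>\<^sup>+S. \<integral>\<^sup>+\<phi>. ennreal (exp (-l * Sg S \<phi>)) \<partial>A S \<partial>replicate_pmf n P))"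
    by (simp add: nn_integral_cmult nn_integral_add)
  also have "\<dots> \<le> ennreal a * (C ^ n + C ^ n)"
    by (intro mult_left_mono add_mono M1 M2) simp
  also have "\<dots> = ennreal (a * (2 * exp (l\<^sup>2/8 + \<bar>l\<bar> * e/4) ^ n))"
    unfolding C_def a_def by (simp add: ennreal_mult ennreal_power[symmetric] mult_2[symmetric] ennreal_plus[symmetric])
  finally have NN: "(\<integral>\<^sup>+S. ennreal (?F S) \<partial>replicate_pmf n P) \<le> ennreal (a * (2 * exp (l\<^sup>2/8 + \<bar>l\<bar> * e/4) ^ n))" .
  have Fnn: "?F S \<ge> 0" for S by simp
  have "measure_pmf.expectation (replicate_pmf n P) ?F = enn2real (\<integral>\<^sup>+S. ennreal (?F S) \<partial>replicate_pmf n P)"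
    by (rule integral_eq_nn_integral) auto
  also have "\<dots> \<le> enn2real (ennreal (a * (2 * exp (l\<^sup>2/8 + \<bar>l\<bar> * e/4) ^ n)))"
    by (rule enn2real_mono[OF NN]) simp
  also have "\<dots> = a * (2 * exp (l\<^sup>2/8 + \<bar>l\<bar> * e/4) ^ n)"
    unfolding a_def by simp
  also have "\<dots> = 2 * exp (- (real n * l\<^sup>2 / 8))"
  proof -
    have "exp (l\<^sup>2/8 + \<bar>l\<bar> * e/4) ^ n = exp (real n * (l\<^sup>2/8 + \<bar>l\<bar> * e/4))"
      by (simp add: exp_of_nat_mult)
    moreover have "-(l * real n * \<tau>) + real n * (l\<^sup>2/8 + \<bar>l\<bar> * e/4) = - (real n * l\<^sup>2 / 8)"
      using lpos unfolding l_def by (simp add: power2_eq_square field_simps)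
    ultimately show ?thesis unfolding a_def by (simp add: exp_add[symmetric] mult.left_commute)
  qed
  also have "\<dots> \<le> 3 * sqrt 2 * exp (- (\<tau>\<^sup>2 * real n))"
  proof -
    have "9 * \<tau>\<^sup>2 \<le> l\<^sup>2" using l3 tpos by (simp add: power2_eq_square mult_mono[of "3*\<tau>" l "3*\<tau>" l, simplified])
    hence "8 * \<tau>\<^sup>2 \<le> l\<^sup>2" using zero_le_power2[of \<tau>] by linarith
    hence "real n * (8 * \<tau>\<^sup>2) \<le> real n * l\<^sup>2" by (intro mult_left_mono) auto
    hence "\<tau>\<^sup>2 * real n \<le> real n * l\<^sup>2 / 8" by (simp add: algebra_simps)
    hence "exp (- (real n * l\<^sup>2 / 8)) \<le> exp (- (\<tau>\<^sup>2 * real n))" by simp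
    moreover have "2 \<le> 3 * sqrt (2::real)"
    proof -
      have "(1::real) \<le> sqrt 2" by simp
      thus ?thesis by linarith
    qed
    ultimately show ?thesis by (intro mult_mono) auto
  qed
  finally show ?thesis .
qed


end
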